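(* Let $d\ge 1$ and $2\le n_1\le n_2\le\cdots\le n_d$ be integers, and let $G=K_{n_1}\times K_{n_2}\times\cdots\times K_{n_d}$. Then $\sigma_T(G)=2d-1$ if $n_1=2$, and $\sigma_T(G)=2d$ if $n_1\ge 3$.
   Context: $K_n$ is the complete graph on $n$ vertices and $\times$ is the Cartesian product of graphs. Thus $G$ has vertex set $\{(x_1,\dots,x_d): x_i\in\{0,1,\dots,n_i-1\}\}$, two vertices being adjacent iff they differ in exactly one coordinate (a Hamming graph). For a spanning tree $T$ of a connected graph $G$, $d_T(u,v)$ is the distance between $u$ and $v$ in $T$, $\sigma_T(G,T):=\max_{uv\in E(G)} d_T(u,v)$, and the tree-stretch is $\sigma_T(G):=\min\{\sigma_T(G,T): T \text{ a spanning tree of } G\}$. *)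

theory Defs
  imports Main
begin

definition walk :: "'a set \<Rightarrow> 'a set set \<Rightarrow> 'a list \<Rightarrow> bool" where
  "walk V E xs = (xs \<noteq> [] \<and> set xs \<subseteq> V \<and> (\<forall>i. Suc i < length xs \<longrightarrow> {xs!i, xs!Suc i} \<in> E))"

definition connected_graph :: "'a set \<Rightarrow> 'a set set \<Rightarrow> bool" where
  "connected_graph V E = (\<forall>u\<in>V. \<forall>v\<in>V. \<exists>xs. walk V E xs \<and> hd xs = u \<and> last xs = v)"

definition is_cycle :: "'a set \<Rightarrow> 'a set set \<Rightarrow> 'a list \<Rightarrow> bool" where
  "is_cycle V E xs = (3 \<le> length xs \<and> distinct xs \<and> walk V E xs \<and> {last xs, hd xs} \<in> E)"

definition is_graph :: "'a set \<Rightarrow> 'a set set \<Rightarrow> bool" where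
  "is_graph V E = (\<forall>e\<in>E. \<exists>u v. e = {u, v} \<and> u \<noteq> v \<and> u \<in> V \<and> v \<in> V)"

definition is_tree :: "'a set \<Rightarrow> 'a set set \<Rightarrow> bool" where
  "is_tree V E = (is_graph V E \<and> connected_graph V E \<and> \<not> (\<exists>xs. is_cycle V E xs))"

definition spanning_tree :: "'a set \<Rightarrow> 'a set set \<Rightarrow> 'a set set \<Rightarrow> bool" where
  "spanning_tree V E T = (T \<subseteq> E \<and> is_tree V T)"

definition graph_dist :: "'a set \<Rightarrow> 'a set set \<Rightarrow> 'a \<Rightarrow> 'a \<Rightarrow> nat" where
  "graph_dist V E u v = (LEAST k. \<exists>xs. walk V E xs \<and> hd xs = u \<and> last xs = v \<and> length xs = Suc k)"

definition stretch :: "'a set \<Rightarrow> 'a set set \<Rightarrow> 'a set set \<Rightarrow> nat" where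
  "stretch V E T = Max {graph_dist V T u v | u v. {u, v} \<in> E}"

definition tree_stretch :: "'a set \<Rightarrow> 'a set set \<Rightarrow> nat" where
  "tree_stretch V E = Min {stretch V E T | T. spanning_tree V E T}"

text \<open>Hamming graph K_{n_1} x ... x K_{n_d}, ns = [n_1,...,n_d].\<close>
definition hamming_V :: "nat list \<Rightarrow> nat list set" where
  "hamming_V ns = {xs. length xs = length ns \<and> (\<forall>i<length ns. xs!i < ns!i)}"

definition hamming_E :: "nat list \<Rightarrow> nat list set set" where
  "hamming_E ns = {{x, y} | x y. x \<in> hamming_V ns \<and> y \<in> hamming_V ns \<and>
                     card {i. i < length ns \<and> x!i \<noteq> y!i} = 1}"

end

theory Submission
  imports Defs
begin


abbreviation adjE :: "'a set set \<Rightarrow> 'a \<Rightarrow> 'a \<Rightarrow> bool" where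
  "adjE E \<equiv> (\<lambda>a b. {a,b} \<in> E)"

lemma walk_alt: "walk V E xs \<longleftrightarrow> xs \<noteq> [] \<and> set xs \<subseteq> V \<and> successively (adjE E) xs"
  unfolding walk_def successively_conv_nth by blast

lemma succ_sym_rev: "successively (adjE E) (rev xs) \<longleftrightarrow> successively (adjE E) xs"
  by (simp add: insert_commute)

lemma walk_rev: "walk V E xs \<Longrightarrow> walk V E (rev xs)"
  unfolding walk_alt by (metis succ_sym_rev rev_is_Nil_conv set_rev)

lemma walk_append: "walk V E xs \<Longrightarrow> walk V E ys \<Longrightarrow> last xs = hd ys \<Longrightarrow> walk V E (xs @ tl ys)"
  unfolding walk_alt
  apply (cases ys; cases "tl ys")
  apply (auto simp: successively_append_iff successively_Cons)
  done

definition rch :: "'a set \<Rightarrow> 'a set set \<Rightarrow> nat \<Rightarrow> 'a \<Rightarrow> 'a \<Rightarrow> bool" where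
  "rch V E k u v = (\<exists>xs. walk V E xs \<and> hd xs = u \<and> last xs = v \<and> length xs \<le> Suc k)"

lemma rch_refl: "u \<in> V \<Longrightarrow> rch V E 0 u u"
  unfolding rch_def by (rule exI[of _ "[u]"]) (simp add: walk_alt)

lemma rch_edge: "{u,v} \<in> E \<Longrightarrow> u \<in> V \<Longrightarrow> v \<in> V \<Longrightarrow> rch V E 1 u v"
  unfolding rch_def by (rule exI[of _ "[u,v]"]) (simp add: walk_alt)

lemma rch_mono: "rch V E k u v \<Longrightarrow> k \<le> k' \<Longrightarrow> rch V E k' u v"
  unfolding rch_def by fastforce

lemma rch_trans: "rch V E k u v \<Longrightarrow> rch V E k' v w \<Longrightarrow> rch V E (k+k') u w"
proof -
  assume "rch V E k u v" "rch V E k' v w"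
  then obtain xs ys where a: "walk V E xs" "hd xs = u" "last xs = v" "length xs \<le> Suc k"
    and b: "walk V E ys" "hd ys = v" "last ys = w" "length ys \<le> Suc k'"
    unfolding rch_def by blast
  have ne: "xs \<noteq> []" "ys \<noteq> []" using a b by (auto simp: walk_alt)
  have "walk V E (xs @ tl ys)" using walk_append[OF a(1) b(1)] a b by auto
  moreover have "hd (xs @ tl ys) = u" using a ne by simp
  moreover have "last (xs @ tl ys) = w" using a b ne
    by (cases ys; cases "tl ys") auto
  moreover have "length (xs @ tl ys) \<le> Suc (k+k')" using a b ne by (cases ys) auto
  ultimately show ?thesis unfolding rch_def by blast
qed

lemma rch_sym: "rch V E k u v \<Longrightarrow> rch V E k v u"
  unfolding rch_def
  by (metis hd_rev last_rev length_rev walk_rev)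

lemma rch_dist: "rch V E k u v \<Longrightarrow> graph_dist V E u v \<le> k"
proof -
  assume "rch V E k u v"
  then obtain xs where a: "walk V E xs" "hd xs = u" "last xs = v" "length xs \<le> Suc k"
    unfolding rch_def by blast
  have ne: "xs \<noteq> []" using a by (auto simp: walk_alt)
  have "graph_dist V E u v \<le> length xs - 1"
    unfolding graph_dist_def using a ne by (intro Least_le) (rule exI[of _ xs], auto)
  thus ?thesis using a by simp
qed

lemma walk_to_path:
  "walk V E xs \<Longrightarrow> \<exists>ys. walk V E ys \<and> distinct ys \<and> hd ys = hd xs \<and> last ys = last xs \<and> length ys \<le> length xs"
proof (induction "length xs" arbitrary: xs rule: less_induct)
  case less
  show ?case
  proof (cases "distinct xs")
    case True then show ?thesis using less.prems by blast
  next
    case False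
    then obtain as bs cs y where xs: "xs = as@[y]@bs@[y]@cs" using not_distinct_decomp by blast
    let ?n = "as @ [y] @ cs"
    have w: "walk V E ?n" using less.prems unfolding xs walk_alt
      by (auto simp: successively_append_iff successively_Cons split: if_splits)
    have "length ?n < length xs" using xs by simp
    from less.hyps[OF this w] obtain ys where "walk V E ys \<and> distinct ys \<and> hd ys = hd ?n \<and> last ys = last ?n \<and> length ys \<le> length ?n" by blast
    moreover have "hd ?n = hd xs" "last ?n = last xs" using xs by (cases as; simp)+
    ultimately show ?thesis using \<open>length ?n < length xs\<close> by auto
  qed
qed



lemma path_unique:
  assumes nc: "\<not> (\<exists>cs. is_cycle V T cs)"
  shows "walk V T xs \<Longrightarrow> distinct xs \<Longrightarrow> walk V T ys \<Longrightarrow> distinct ys \<Longrightarrow>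
         hd xs = hd ys \<Longrightarrow> last xs = last ys \<Longrightarrow> xs = ys"
proof (induction xs arbitrary: ys)
  case Nil then show ?case by (simp add: walk_alt)
next
  case (Cons a xt)
  from Cons.prems obtain yt where ys: "ys = a # yt" by (cases ys) (auto simp: walk_alt)
  show ?case
  proof (cases "xt = []")
    case True
    have "yt = []"
    proof (rule ccontr)
      assume "yt \<noteq> []"
      then have "last yt \<in> set yt" "last yt = a" using Cons.prems ys True by auto
      then show False using Cons.prems ys by auto
    qed
    then show ?thesis using ys True by simp
  next
    case xne: False
    have yne: "yt \<noteq> []" using Cons.prems ys xne by auto
    show ?thesis
    proof (cases "hd xt = hd yt")
      case True
      have "walk V T xt" "walk V T yt" using Cons.prems ys xne yne
        by (auto simp: walk_alt successively_Cons)
      then have "xt = yt" using Cons.IH[of yt] Cons.prems ys xne yne True by auto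
      then show ?thesis using ys by simp
    next
      case hne: False
      have "last xt \<in> set yt" using Cons.prems ys xne yne by auto
      then have "\<exists>z\<in>set xt. z \<in> set yt" using xne by auto
      then obtain xp z xr where xt: "xt = xp @ z # xr" and zy: "z \<in> set yt"
        and xp: "\<forall>u\<in>set xp. u \<notin> set yt"
        using split_list_first_prop[of xt "\<lambda>u. u \<in> set yt"] by blast
      obtain yp yr where yt: "yt = yp @ z # yr" using zy split_list by metis
      define cs where "cs = (a # xp) @ (z # rev yp)"
      have sx: "successively (adjE T) (a # xt)" and sy: "successively (adjE T) (a # yt)"
        using Cons.prems ys by (auto simp: walk_alt)
      have s1: "successively (adjE T) (a # xp @ [z])"
        using sx successively_append_iff[of "adjE T" "a # xp @ [z]" xr] unfolding xt by simp
      have s2: "successively (adjE T) (yp @ [z])"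
      proof -
        have "successively (adjE T) (a # yp @ [z])"
          using sy successively_append_iff[of "adjE T" "a # yp @ [z]" yr] unfolding yt by simp
        then show ?thesis by (simp add: successively_Cons)
      qed
      have s2': "successively (adjE T) (z # rev yp)"
        using s2 succ_sym_rev[of T "yp @ [z]"] by simp
      have succ: "successively (adjE T) cs" unfolding cs_def
        using s1 s2' successively_append_iff[of "adjE T" "a # xp" "z # rev yp"]
          successively_append_iff[of "adjE T" "a # xp" "[z]"] by auto
      have setcs: "set cs \<subseteq> V" using Cons.prems ys xt yt unfolding cs_def
        by (auto simp: walk_alt)
      have dist: "distinct cs" using Cons.prems ys xt yt xp unfolding cs_def by auto
      have len: "3 \<le> length cs"
      proof -
        have "xp \<noteq> [] \<or> yp \<noteq> []" using hne xt yt by auto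
        then show ?thesis unfolding cs_def by (auto simp: Suc_le_eq)
      qed
      have lst: "last cs = hd yt" unfolding cs_def yt by (cases yp) auto
      have "{a, hd yt} \<in> T" using sy yne by (cases yt) auto
      then have "{last cs, hd cs} \<in> T" using lst unfolding cs_def by (simp add: insert_commute)
      then have "is_cycle V T cs" using succ setcs dist len unfolding is_cycle_def walk_alt
        by (auto simp: cs_def)
      then show ?thesis using nc by blast
    qed
  qed
qed



definition ispath :: "'a set \<Rightarrow> 'a set set \<Rightarrow> 'a \<Rightarrow> 'a \<Rightarrow> 'a list \<Rightarrow> bool" where
  "ispath V T x y p = (walk V T p \<and> distinct p \<and> hd p = x \<and> last p = y)"

locale tr =
  fixes V :: "'a set" and T :: "'a set set"
  assumes tree: "is_tree V T"
begin

abbreviation "D \<equiv> graph_dist V T"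

lemma nc: "\<not> (\<exists>cs. is_cycle V T cs)" using tree unfolding is_tree_def by blast

lemma uniq: "ispath V T x y p \<Longrightarrow> ispath V T x y q \<Longrightarrow> p = q"
  unfolding ispath_def using path_unique[OF nc] by metis

lemma ex_path: "x \<in> V \<Longrightarrow> y \<in> V \<Longrightarrow> \<exists>p. ispath V T x y p"
proof -
  assume "x \<in> V" "y \<in> V"
  then obtain xs where "walk V T xs" "hd xs = x" "last xs = y"
    using tree unfolding is_tree_def connected_graph_def by blast
  then show ?thesis using walk_to_path[of V T xs] unfolding ispath_def by metis
qed

lemma path_len: assumes "ispath V T x y p" shows "length p = Suc (D x y)"
proof -
  have w: "walk V T p" "hd p = x" "last p = y" using assms unfolding ispath_def by auto
  have ne: "p \<noteq> []" using w by (auto simp: walk_alt)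
  have ex: "\<exists>xs. walk V T xs \<and> hd xs = x \<and> last xs = y \<and> length xs = Suc (length p - 1)"
    using w ne by (intro exI[of _ p]) auto
  have le: "D x y \<le> length p - 1" unfolding graph_dist_def by (rule Least_le) (use ex in auto)
  have ex2: "\<exists>k xs. walk V T xs \<and> hd xs = x \<and> last xs = y \<and> length xs = Suc k"
    using ex by blast
  obtain q where q: "walk V T q" "hd q = x" "last q = y" "length q = Suc (D x y)"
    using LeastI_ex[OF ex2] unfolding graph_dist_def by blast
  obtain r where r: "walk V T r" "distinct r" "hd r = x" "last r = y" "length r \<le> length q"
    using walk_to_path[OF q(1)] q by metis
  have "r = p" using uniq[of x y r p] r assms unfolding ispath_def by auto
  then show ?thesis using r q le ne by (cases "length p") auto
qed

lemma ispath_rev: "ispath V T x y p \<Longrightarrow> ispath V T y x (rev p)"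
  unfolding ispath_def using walk_rev by (fastforce simp: hd_rev last_rev walk_alt)

lemma D_sym: "x \<in> V \<Longrightarrow> y \<in> V \<Longrightarrow> D x y = D y x"
  by (metis ex_path ispath_rev length_rev path_len nat.inject)

definition tp :: "'a \<Rightarrow> 'a \<Rightarrow> 'a list" where
  "tp x y = (THE p. ispath V T x y p)"

lemma tp: "x \<in> V \<Longrightarrow> y \<in> V \<Longrightarrow> ispath V T x y (tp x y)"
  unfolding tp_def by (rule theI') (use ex_path uniq in blast)

lemma tp_eq: "ispath V T x y p \<Longrightarrow> tp x y = p"
  unfolding tp_def using uniq by blast

definition br :: "'a \<Rightarrow> 'a \<Rightarrow> 'a" where
  "br v x = tp v x ! 1"

lemma tp_shape: assumes "v \<in> V" "x \<in> V" "x \<noteq> v"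
  shows "\<exists>r. tp v x = v # br v x # r"
proof -
  have p: "ispath V T v x (tp v x)" using tp assms by blast
  then obtain r where "tp v x = v # r" unfolding ispath_def
    by (cases "tp v x") (auto simp: walk_alt)
  moreover have "r \<noteq> []" using p assms calculation unfolding ispath_def by auto
  ultimately show ?thesis unfolding br_def by (cases r) auto
qed

lemma br_edge: assumes "v \<in> V" "x \<in> V" "x \<noteq> v"
  shows "{v, br v x} \<in> T" "br v x \<in> V"
proof -
  obtain r where e: "tp v x = v # br v x # r" using tp_shape assms by blast
  have p: "ispath V T v x (tp v x)" using tp assms by blast
  then show "{v, br v x} \<in> T" "br v x \<in> V" unfolding e ispath_def walk_alt by auto
qed

lemma F2: assumes "v \<in> V" "x \<in> V" "x \<noteq> v" "x \<noteq> br v x"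
  shows "br (br v x) x \<noteq> v"
proof -
  define w where "w = br v x"
  obtain r where e: "tp v x = v # w # r" using tp_shape assms unfolding w_def by blast
  have p: "ispath V T v x (tp v x)" using tp assms by blast
  have "ispath V T w x (w # r)" using p unfolding e ispath_def walk_alt
    by (auto simp: successively_Cons)
  then have t: "tp w x = w # r" by (rule tp_eq)
  have "r \<noteq> []" using p assms unfolding e ispath_def w_def by auto
  have "br w x = tp w x ! 1" by (simp only: br_def)
  then have "br w x = hd r" using t \<open>r \<noteq> []\<close> by (cases r) auto
  moreover have "v \<notin> set r" using p unfolding e ispath_def by auto
  ultimately show ?thesis using \<open>r \<noteq> []\<close> unfolding w_def by (metis list.set_sel(1))
qed

lemma F1: assumes "v \<in> V" "x \<in> V" "y \<in> V" "x \<noteq> v" "y \<noteq> v" "br v x \<noteq> br v y"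
  shows "D x y = D x v + D v y"
proof -
  let ?P = "tp v x" and ?Q = "tp v y"
  have P: "ispath V T v x ?P" and Q: "ispath V T v y ?Q" using tp assms by auto
  obtain rp where eP: "?P = v # br v x # rp" using tp_shape assms by blast
  obtain rq where eQ: "?Q = v # br v y # rq" using tp_shape assms by blast
  have disj: "set ?P \<inter> set ?Q \<subseteq> {v}"
  proof
    fix z assume z: "z \<in> set ?P \<inter> set ?Q"
    show "z \<in> {v}"
    proof (rule ccontr)
      assume zv: "z \<notin> {v}"
      obtain p1 p2 where sp: "?P = p1 @ z # p2" using z split_list by (metis IntD1)
      obtain q1 q2 where sq: "?Q = q1 @ z # q2" using z split_list by (metis IntD2)
      have p1: "p1 \<noteq> []" using sp eP zv by (cases p1) auto
      have q1: "q1 \<noteq> []" using sq eQ zv by (cases q1) auto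
      have ip: "ispath V T v z (p1 @ [z])" using P p1 unfolding ispath_def walk_alt sp
        using successively_append_iff[of "adjE T" "p1 @ [z]" p2] by auto
      have iq: "ispath V T v z (q1 @ [z])" using Q q1 unfolding ispath_def walk_alt sq
        using successively_append_iff[of "adjE T" "q1 @ [z]" q2] by auto
      have "p1 @ [z] = q1 @ [z]" using uniq[OF ip iq] .
      then have "p1 = q1" by simp
      moreover have "br v x = (p1 @ z # p2) ! 1" using eP sp by simp
      moreover have "br v y = (q1 @ z # q2) ! 1" using eQ sq by simp
      moreover have "(p1 @ z # p2) ! 1 = (p1 @ [z]) ! 1" "(q1 @ z # q2) ! 1 = (q1 @ [z]) ! 1"
        using p1 q1 by (cases p1; cases q1; auto simp: nth_append)+
      ultimately show False using assms(6) by simp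
    qed
  qed
  let ?C = "rev ?P @ tl ?Q"
  have wP: "walk V T (rev ?P)" using walk_rev P unfolding ispath_def by blast
  have j: "last (rev ?P) = hd ?Q" "walk V T ?Q" using P Q by (auto simp: ispath_def last_rev)
  have wC: "walk V T ?C" using walk_append[OF wP j(2) j(1)] .
  have dC: "distinct ?C"
  proof -
    have "v \<notin> set (tl ?Q)" using Q eQ unfolding ispath_def by auto
    moreover have "set (tl ?Q) \<subseteq> set ?Q" using eQ by auto
    ultimately have "set ?P \<inter> set (tl ?Q) = {}" using disj by blast
    then show ?thesis using P Q unfolding ispath_def using distinct_tl by auto
  qed
  have ne: "?P \<noteq> []" "tl ?Q \<noteq> []" using eP eQ by auto
  have "hd ?C = x" using ne P by (simp add: ispath_def hd_rev)
  moreover have "last ?C = y" using ne Q by (simp add: ispath_def last_tl)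
  ultimately have "ispath V T x y ?C" unfolding ispath_def using wC dC by auto
  then have "length ?C = Suc (D x y)" by (rule path_len)
  moreover have "length ?C = length ?P + length ?Q - 1" using eQ by simp
  moreover have "length ?P = Suc (D v x)" "length ?Q = Suc (D v y)" using P Q path_len by auto
  ultimately show ?thesis using D_sym assms by simp
qed

end


context tr begin

lemma edge_ne: "{a,b} \<in> T \<Longrightarrow> a \<noteq> b"
  using tree unfolding is_tree_def is_graph_def
  by (metis doubleton_eq_iff insert_absorb2)

lemma succ_upt: "(\<forall>k. P (f k) (f (Suc k))) \<Longrightarrow> successively P (map f [i..<i+g])"
proof (induction g)
  case 0 then show ?case by simp
next
  case (Suc g)
  then show ?case by (cases g) (auto simp: successively_append_iff)
qed

lemma no_nb:
  assumes fin: "finite V"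
    and f: "\<forall>k. f k \<in> V \<and> {f k, f (Suc k)} \<in> T \<and> f (Suc (Suc k)) \<noteq> f k"
  shows False
proof -
  have "\<not> inj f"
  proof
    assume "inj f"
    then have "infinite (range f)" using finite_imageD by blast
    moreover have "range f \<subseteq> V" using f by auto
    ultimately show False using fin finite_subset by blast
  qed
  then have ex: "\<exists>g i. 0 < g \<and> f i = f (i + g)"
    unfolding inj_def by (metis less_imp_add_positive nat_neq_iff)
  define g where "g = (LEAST g. \<exists>i. 0 < g \<and> f i = f (i + g))"
  obtain i where gi: "0 < g" "f i = f (i + g)"
    using LeastI_ex[OF ex] unfolding g_def by blast
  have gmin: "\<And>g' i'. 0 < g' \<Longrightarrow> f i' = f (i' + g') \<Longrightarrow> g \<le> g'"
    unfolding g_def by (rule Least_le) blast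
  have g1: "g \<noteq> 1" using gi edge_ne f by (metis Suc_eq_plus1 add.commute plus_1_eq_Suc)
  have g2: "g \<noteq> 2" using gi f by (metis add_2_eq_Suc')
  define cs where "cs = map f [i..<i+g]"
  have dist: "distinct cs"
    unfolding cs_def distinct_map
  proof
    show "distinct [i..<i+g]" by simp
    show "inj_on f (set [i..<i+g])"
    proof (rule inj_onI)
      fix a b assume a: "a \<in> set [i..<i+g]" and b: "b \<in> set [i..<i+g]" and e: "f a = f b"
      show "a = b"
      proof (rule ccontr)
        assume "a \<noteq> b"
        then consider "a < b" | "b < a" by linarith
        then show False
        proof cases
          case 1
          have "g \<le> b - a" using gmin[of "b - a" a] e 1 by simp
          then show False using a b 1 by auto
        next
          case 2
          have "g \<le> a - b" using gmin[of "a - b" b] e 2 by simp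
          then show False using a b 2 by auto
        qed
      qed
    qed
  qed
  have len: "3 \<le> length cs" using gi g1 g2 unfolding cs_def by simp
  have succ: "successively (adjE T) cs" unfolding cs_def by (rule succ_upt) (use f in blast)
  have setv: "set cs \<subseteq> V" unfolding cs_def using f by auto
  have "last cs = f (i + g - 1)" "hd cs = f i" unfolding cs_def using gi
    by (auto simp: last_map hd_map)
  moreover have "{f (i + g - 1), f (i+g)} \<in> T" using f gi
    by (metis Suc_diff_1 add_gr_0)
  ultimately have "{last cs, hd cs} \<in> T" using gi by (simp add: insert_commute)
  then have "is_cycle V T cs" unfolding is_cycle_def walk_alt using dist len succ setv len by auto
  then show False using nc by blast
qed

end


definition hm :: "nat list \<Rightarrow> nat list \<Rightarrow> nat list \<Rightarrow> nat" where
  "hm ns x y = card {i. i < length ns \<and> x!i \<noteq> y!i}"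

lemma hm_sym: "hm ns x y = hm ns y x"
  unfolding hm_def by (simp add: eq_commute)

lemma hm_tri: "hm ns x z \<le> hm ns x y + hm ns y z"
proof -
  have "{i. i < length ns \<and> x!i \<noteq> z!i} \<subseteq> {i. i < length ns \<and> x!i \<noteq> y!i} \<union> {i. i < length ns \<and> y!i \<noteq> z!i}"
    by auto
  then have "hm ns x z \<le> card ({i. i < length ns \<and> x!i \<noteq> y!i} \<union> {i. i < length ns \<and> y!i \<noteq> z!i})"
    unfolding hm_def by (intro card_mono) auto
  also have "\<dots> \<le> hm ns x y + hm ns y z" unfolding hm_def by (rule card_Un_le)
  finally show ?thesis .
qed

lemma hm_le: "hm ns x y \<le> length ns"
proof -
  have "hm ns x y \<le> card {..<length ns}" unfolding hm_def by (intro card_mono) auto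
  then show ?thesis by simp
qed

lemma hm_full: "(\<forall>i<length ns. x!i \<noteq> y!i) \<Longrightarrow> hm ns x y = length ns"
proof -
  assume "\<forall>i<length ns. x!i \<noteq> y!i"
  then have "{i. i < length ns \<and> x!i \<noteq> y!i} = {..<length ns}" by auto
  then show ?thesis unfolding hm_def by simp
qed

lemma hm_zero: "x \<in> hamming_V ns \<Longrightarrow> y \<in> hamming_V ns \<Longrightarrow> hm ns x y = 0 \<Longrightarrow> x = y"
  unfolding hm_def hamming_V_def by (auto intro: nth_equalityI)

lemma E_iff: "{u,v} \<in> hamming_E ns \<longleftrightarrow> u \<in> hamming_V ns \<and> v \<in> hamming_V ns \<and> hm ns u v = 1"
proof
  assume "{u,v} \<in> hamming_E ns"
  then obtain x y where "{u,v} = {x,y}" "x \<in> hamming_V ns" "y \<in> hamming_V ns" "hm ns x y = 1"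
    unfolding hamming_E_def hm_def by blast
  then show "u \<in> hamming_V ns \<and> v \<in> hamming_V ns \<and> hm ns u v = 1"
    unfolding doubleton_eq_iff using hm_sym by metis
next
  assume "u \<in> hamming_V ns \<and> v \<in> hamming_V ns \<and> hm ns u v = 1"
  then show "{u,v} \<in> hamming_E ns" unfolding hamming_E_def hm_def by blast
qed

lemma E_memV: "{u,v} \<in> hamming_E ns \<Longrightarrow> u \<in> hamming_V ns \<and> v \<in> hamming_V ns"
  using E_iff by blast

lemma upd_V: "x \<in> hamming_V ns \<Longrightarrow> j < length ns \<Longrightarrow> c < ns!j \<Longrightarrow> x[j := c] \<in> hamming_V ns"
  unfolding hamming_V_def by (auto simp: nth_list_update)

lemma hm_upd_set: "length x = length ns \<Longrightarrow> j < length ns \<Longrightarrow> x!j \<noteq> c \<Longrightarrow>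
   {i. i < length ns \<and> x!i \<noteq> x[j:=c]!i} = {j}"
  by (auto simp: nth_list_update)

lemma hm_upd: "length x = length ns \<Longrightarrow> j < length ns \<Longrightarrow> x!j \<noteq> c \<Longrightarrow> hm ns x (x[j:=c]) = 1"
  unfolding hm_def using hm_upd_set[of x ns j c] by simp

lemma finite_V: "finite (hamming_V ns)"
proof -
  let ?A = "{..<Suc (Max (insert 0 (set ns)))}"
  have "hamming_V ns \<subseteq> {xs. set xs \<subseteq> ?A \<and> length xs = length ns}"
  proof
    fix xs assume a: "xs \<in> hamming_V ns"
    have "set xs \<subseteq> ?A"
    proof
      fix z assume "z \<in> set xs"
      then obtain i where i: "i < length xs" "z = xs!i" by (auto simp: in_set_conv_nth)
      then have "z < ns!i" "i < length ns" using a unfolding hamming_V_def by auto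
      moreover have m: "ns!i \<le> Max (insert 0 (set ns))" using \<open>i < length ns\<close>
        by (intro Max_ge) auto
      ultimately have "z < Suc (Max (insert 0 (set ns)))" by linarith
      then show "z \<in> ?A" by (simp only: lessThan_iff)
    qed
    then show "xs \<in> {xs. set xs \<subseteq> ?A \<and> length xs = length ns}" using a
      unfolding hamming_V_def by simp
  qed
  then show ?thesis by (rule finite_subset) (rule finite_lists_length_eq, simp)
qed

lemma finite_E: "finite (hamming_E ns)"
proof -
  have "hamming_E ns \<subseteq> Pow (hamming_V ns)"
  proof
    fix e assume "e \<in> hamming_E ns"
    then obtain x y where "e = {x,y}" "x \<in> hamming_V ns" "y \<in> hamming_V ns"
      unfolding hamming_E_def by blast
    then show "e \<in> Pow (hamming_V ns)" by simp
  qed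
  then show ?thesis by (rule finite_subset) (simp add: finite_V)
qed

lemma walk_hm: "walk V T xs \<Longrightarrow> T \<subseteq> hamming_E ns \<Longrightarrow> hm ns (hd xs) (last xs) \<le> length xs - 1"
proof (induction xs)
  case Nil then show ?case by (simp add: walk_alt)
next
  case (Cons a xs)
  show ?case
  proof (cases xs)
    case Nil then show ?thesis unfolding hm_def by simp
  next
    case (Cons b ys)
    have w: "walk V T xs" "{a,b} \<in> T" using Cons.prems Cons by (auto simp: walk_alt)
    then have "hm ns a b = 1" using Cons.prems E_iff by blast
    moreover have "hm ns b (last xs) \<le> length xs - 1" using Cons.IH w Cons.prems Cons by simp
    ultimately show ?thesis using hm_tri[of ns a "last xs" b] Cons by simp
  qed
qed

lemma D_hm: "tr V T \<Longrightarrow> T \<subseteq> hamming_E ns \<Longrightarrow> x \<in> V \<Longrightarrow> y \<in> V \<Longrightarrow> hm ns x y \<le> graph_dist V T x y"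
proof -
  assume t: "tr V T" and a: "T \<subseteq> hamming_E ns" "x \<in> V" "y \<in> V"
  interpret tr V T by (rule t)
  obtain p where p: "ispath V T x y p" using ex_path a by blast
  have "hm ns x y \<le> length p - 1" using walk_hm[of V T p ns] p a unfolding ispath_def by auto
  then show ?thesis using path_len[OF p] by simp
qed



lemma lower_bound:
  assumes len: "1 \<le> length ns" and srt: "sorted ns" and ge2: "\<forall>i<length ns. 2 \<le> ns!i"
    and st: "spanning_tree (hamming_V ns) (hamming_E ns) T"
  shows "(if ns!0 = 2 then 2 * length ns - 1 else 2 * length ns) \<le> stretch (hamming_V ns) (hamming_E ns) T"
proof (rule ccontr)
  define V where "V = hamming_V ns"
  define E where "E = hamming_E ns"
  define d where "d = length ns"
  define b where "b = (if ns!0 = 2 then 2 * length ns - 1 else 2 * length ns)"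
  have tt: "tr V T" using st unfolding spanning_tree_def tr_def V_def by blast
  interpret tr V T by (rule tt)
  have TE: "T \<subseteq> E" using st unfolding spanning_tree_def E_def by blast
  assume "\<not> (if ns!0 = 2 then 2 * length ns - 1 else 2 * length ns) \<le> stretch (hamming_V ns) (hamming_E ns) T"
  then have lt: "stretch V E T < b" unfolding b_def V_def E_def by simp
  let ?S = "{graph_dist V T u v | u v. {u, v} \<in> E}"
  have finS: "finite ?S"
  proof -
    have sub: "?S \<subseteq> (\<lambda>(u,v). graph_dist V T u v) ` (V \<times> V)"
    proof
      fix z assume "z \<in> ?S"
      then obtain u v where uv: "z = graph_dist V T u v" "{u,v} \<in> E" by blast
      then have "u \<in> V" "v \<in> V" using E_memV unfolding E_def V_def by blast+
      then show "z \<in> (\<lambda>(u,v). graph_dist V T u v) ` (V \<times> V)" using uv(1) by force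
    qed
    have "finite (V \<times> V)" using finite_V unfolding V_def by simp
    then have "finite ((\<lambda>(u,v). graph_dist V T u v) ` (V \<times> V))" by (rule finite_imageI)
    then show ?thesis by (rule finite_subset[OF sub])
  qed
  have H: "\<And>x y. {x,y} \<in> E \<Longrightarrow> D x y < b"
  proof -
    fix x y assume "{x,y} \<in> E"
    then have "D x y \<in> ?S" by blast
    then have "D x y \<le> stretch V E T" unfolding stretch_def using finS by (rule Max_ge[rotated])
    then show "D x y < b" using lt by simp
  qed
  have Dge: "\<And>x y. x \<in> V \<Longrightarrow> y \<in> V \<Longrightarrow> hm ns x y \<le> D x y"
    by (rule D_hm[OF tt]) (use TE in \<open>auto simp: E_def\<close>)
  have EV: "\<And>x y. {x,y} \<in> E \<Longrightarrow> x \<in> V \<and> y \<in> V" using E_memV unfolding E_def V_def by blast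
  have Eiff: "\<And>x y. {x,y} \<in> E \<longleftrightarrow> x \<in> V \<and> y \<in> V \<and> hm ns x y = 1"
    using E_iff unfolding E_def V_def by blast
  have lenV: "\<And>x. x \<in> V \<Longrightarrow> length x = d" unfolding V_def hamming_V_def d_def by simp
  have d1: "1 \<le> d" using len unfolding d_def by simp
  have n0: "2 \<le> ns!0" using ge2 len by (simp add: Suc_le_eq)
  have b2: "2 \<le> b"
  proof (rule ccontr)
    assume "\<not> 2 \<le> b"
    define x0 where "x0 = replicate d (0::nat)"
    have x0V: "x0 \<in> V" unfolding x0_def V_def hamming_V_def d_def using ge2 by auto
    have x1V: "x0[0 := 1] \<in> V" unfolding V_def
      by (rule upd_V) (use x0V n0 d1 in \<open>auto simp: V_def d_def\<close>)
    have "hm ns x0 (x0[0 := 1]) = 1"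
      by (rule hm_upd) (use d1 in \<open>auto simp: x0_def d_def Suc_le_eq\<close>)
    then have "{x0, x0[0:=1]} \<in> E" using Eiff x0V x1V by blast
    then have "D x0 (x0[0:=1]) < b" by (rule H)
    moreover have "1 \<le> D x0 (x0[0:=1])" using Dge[OF x0V x1V] \<open>hm ns x0 (x0[0 := 1]) = 1\<close> by simp
    ultimately show False using \<open>\<not> 2 \<le> b\<close> by simp
  qed
  have bd: "b \<le> 2 * d" unfolding b_def d_def by simp
  define a where "a v = map (\<lambda>i. Suc (v!i) mod ns!i) [0..<d]" for v :: "nat list"
  have aV: "\<And>v. v \<in> V \<Longrightarrow> a v \<in> V \<and> (\<forall>i<d. a v ! i \<noteq> v ! i)"
  proof -
    fix v assume v: "v \<in> V"
    have "\<forall>i<d. a v ! i \<noteq> v ! i"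
    proof (intro allI impI)
      fix i assume i: "i < d"
      have "v!i < ns!i" "2 \<le> ns!i" using v i ge2 unfolding V_def hamming_V_def d_def by auto
      then show "a v ! i \<noteq> v ! i" unfolding a_def using i
        by (cases "Suc (v!i) = ns!i") auto
    qed
    moreover have "a v \<in> V" unfolding V_def hamming_V_def a_def d_def using ge2 by auto
    ultimately show "a v \<in> V \<and> (\<forall>i<d. a v ! i \<noteq> v ! i)" by blast
  qed
  define Anti where "Anti v x = (x \<in> V \<and> (\<forall>i<d. x!i \<noteq> v!i))" for v x :: "nat list"
  have Anti_ne: "\<And>v x. Anti v x \<Longrightarrow> x \<noteq> v" unfolding Anti_def using d1 by fastforce
  have Anti_hm: "\<And>v x. Anti v x \<Longrightarrow> hm ns v x = d" unfolding Anti_def d_def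
    by (metis hm_full)
  have C: "\<And>n v x y. v \<in> V \<Longrightarrow> Anti v x \<Longrightarrow> Anti v y \<Longrightarrow> hm ns x y = n \<Longrightarrow> br v x = br v y"
  proof -
    fix n v x y
    assume v: "v \<in> V" and ax: "Anti v x" and ay: "Anti v y" and n: "hm ns x y = n"
    show "br v x = br v y" using ax n
    proof (induction n arbitrary: x rule: less_induct)
      case (less n x)
      show ?case
      proof (cases "n = 0")
        case True
        then have "x = y" using hm_zero less.prems ay unfolding Anti_def V_def by blast
        then show ?thesis by simp
      next
        case False
        let ?Sx = "{i. i < length ns \<and> x!i \<noteq> y!i}"
        have "?Sx \<noteq> {}" using False less.prems unfolding hm_def by (metis card.empty)
        then obtain j where j: "j < d" "x!j \<noteq> y!j" unfolding d_def by blast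
        define x' where "x' = x[j := y!j]"
        have xV: "x \<in> V" and yV: "y \<in> V" using less.prems ay unfolding Anti_def by auto
        have x'V: "x' \<in> V" unfolding x'_def V_def
          by (rule upd_V) (use xV yV j in \<open>auto simp: V_def hamming_V_def d_def\<close>)
        have ax': "Anti v x'" unfolding Anti_def
        proof (intro conjI allI impI)
          show "x' \<in> V" by (rule x'V)
          fix k assume k: "k < d"
          show "x'!k \<noteq> v!k" using less.prems(1) ay k lenV[OF xV] unfolding Anti_def x'_def
            by (cases "k = j") auto
        qed
        have "{i. i < length ns \<and> x'!i \<noteq> y!i} = ?Sx - {j}"
          unfolding x'_def using j lenV[OF xV] unfolding d_def by (auto simp: nth_list_update)
        moreover have "card (?Sx - {j}) < card ?Sx"
          by (rule card_Diff1_less) (use j in \<open>auto simp: d_def\<close>)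
        ultimately have "hm ns x' y < n" using less.prems unfolding hm_def by simp
        then have IH: "br v x' = br v y" using less.IH ax' by blast
        have "br v x = br v x'"
        proof (rule ccontr)
          assume ne: "br v x \<noteq> br v x'"
          have "D x x' = D x v + D v x'"
            by (rule F1) (use v xV x'V Anti_ne less.prems ax' ne in auto)
          moreover have "d \<le> D x v" using Dge[OF xV v] Anti_hm[OF less.prems(1)] hm_sym by metis
          moreover have "d \<le> D v x'" using Dge[OF v x'V] Anti_hm[OF ax'] by metis
          moreover have "{x, x'} \<in> E" unfolding Eiff x'_def
            using xV x'V j lenV[OF xV] hm_upd unfolding x'_def d_def by metis
          ultimately show False using H bd by fastforce
        qed
        then show ?thesis using IH by simp
      qed
    qed
  qed
  define p where "p v = br v (a v)" for v
  have key: "\<And>v x. v \<in> V \<Longrightarrow> Anti (br v x) x \<Longrightarrow> x \<noteq> v \<Longrightarrow> br v x = p v \<Longrightarrow> p (p v) \<noteq> v"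
  proof -
    fix v x assume v: "v \<in> V" and aw: "Anti (br v x) x" and xv: "x \<noteq> v" and bx: "br v x = p v"
    have xV: "x \<in> V" using aw unfolding Anti_def by blast
    have xw: "x \<noteq> br v x" using Anti_ne[OF aw] .
    have w: "br v x \<in> V" using br_edge v xV xv by blast
    have "br (br v x) x \<noteq> v" using F2 v xV xv xw by blast
    moreover have "br (br v x) x = p (br v x)" unfolding p_def
      using C[OF w aw, of "a (br v x)"] aV[OF w] unfolding Anti_def by blast
    ultimately show "p (p v) \<noteq> v" using bx by simp
  qed
  have step: "\<And>v. v \<in> V \<Longrightarrow> p v \<in> V \<and> {v, p v} \<in> T \<and> p (p v) \<noteq> v"
  proof -
    fix v assume v: "v \<in> V"
    have av: "a v \<in> V" "\<forall>i<d. a v ! i \<noteq> v ! i" using aV[OF v] by auto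
    have Aav: "Anti v (a v)" unfolding Anti_def using av by auto
    have avv: "a v \<noteq> v" using Anti_ne[OF Aav] .
    have pV: "p v \<in> V" and pT: "{v, p v} \<in> T" using br_edge[OF v av(1) avv] unfolding p_def by auto
    have "{v, p v} \<in> E" using pT TE by (rule subsetD[rotated])
    then have "hm ns v (p v) = 1" by (simp add: Eiff)
    then have "card {j. j < length ns \<and> v!j \<noteq> p v!j} = 1" by (simp only: hm_def)
    then obtain i where i: "{j. j < length ns \<and> v!j \<noteq> p v!j} = {i}"
      by (rule card_1_singletonE)
    have "i \<in> {j. j < length ns \<and> v!j \<noteq> p v!j}" unfolding i by (rule singletonI)
    then have id: "i < d" "v!i \<noteq> p v!i" unfolding d_def by simp_all
    have oth: "\<And>j. j < d \<Longrightarrow> j \<noteq> i \<Longrightarrow> p v!j = v!j"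
    proof (rule ccontr)
      fix j assume j: "j < d" "j \<noteq> i" "p v!j \<noteq> v!j"
      then have "j \<in> {j. j < length ns \<and> v!j \<noteq> p v!j}" unfolding d_def by simp
      then have "j \<in> {i}" by (simp only: i)
      then show False using j by simp
    qed
    have la: "length (a v) = d" using lenV av by blast
    have "p (p v) \<noteq> v"
    proof (cases "ns!0 = 2")
      case True
      then have bb: "b = 2 * d - 1" unfolding b_def d_def by simp
      then have d2: "2 \<le> d" using b2 by simp
      define x where "x = (a v)[i := v!i]"
      have vi: "v!i < ns!i" using v id unfolding V_def hamming_V_def d_def by auto
      have xV: "x \<in> V" unfolding x_def V_def
        by (rule upd_V) (use av id vi in \<open>auto simp: V_def d_def\<close>)
      have hx: "hm ns (a v) x = 1" unfolding x_def
        by (rule hm_upd) (use la id av in \<open>auto simp: d_def\<close>)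
      then have ex: "{a v, x} \<in> E" using Eiff xV av by blast
      define j where "j = (if i = 0 then 1 else (0::nat))"
      have j: "j < d" "j \<noteq> i" unfolding j_def using d2 by auto
      have xj: "x!j = a v!j" unfolding x_def using j by simp
      have xv: "x \<noteq> v" using xj av j by metis
      have "br v x = br v (a v)"
      proof (rule ccontr)
        assume ne: "br v x \<noteq> br v (a v)"
        have "D (a v) x = D (a v) v + D v x"
          by (rule F1) (use v xV av avv xv ne in auto)
        moreover have "d \<le> D (a v) v" using Dge[OF av(1) v] Anti_hm[OF Aav] hm_sym by metis
        moreover have "d - 1 \<le> D v x"
        proof -
          have "hm ns v (a v) \<le> hm ns v x + hm ns x (a v)" by (rule hm_tri)
          then have "d - 1 \<le> hm ns v x" using Anti_hm[OF Aav] hx hm_sym by (metis diff_le_mono add_diff_cancel_right')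
          then show ?thesis using Dge[OF v xV] by linarith
        qed
        ultimately show False using H[OF ex] bb d2 by linarith
      qed
      then have bxp: "br v x = p v" unfolding p_def by simp
      have "Anti (p v) x" unfolding Anti_def
      proof (intro conjI allI impI)
        show "x \<in> V" by (rule xV)
        fix k assume k: "k < d"
        show "x!k \<noteq> p v!k"
        proof (cases "k = i")
          case True then show ?thesis using id la unfolding x_def by simp
        next
          case False then show ?thesis using oth[OF k False] av k unfolding x_def by simp
        qed
      qed
      then show ?thesis using key[OF v _ xv bxp] bxp by simp
    next
      case False
      have n3: "3 \<le> ns!i"
      proof -
        have "ns!0 \<le> ns!i" using srt id unfolding d_def by (simp add: sorted_nth_mono)
        moreover have "2 \<le> ns!0" by (rule n0)
        ultimately show ?thesis using False by linarith
      qed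
      define c where "c = (if v!i \<noteq> 0 \<and> p v!i \<noteq> 0 then 0 else if v!i \<noteq> 1 \<and> p v!i \<noteq> 1 then 1 else (2::nat))"
      have c: "c \<noteq> v!i" "c \<noteq> p v!i" "c < ns!i" using id n3 unfolding c_def by auto
      define x where "x = (a v)[i := c]"
      have xV: "x \<in> V" unfolding x_def V_def
        by (rule upd_V) (use av id c in \<open>auto simp: V_def d_def\<close>)
      have Ax: "Anti v x" unfolding Anti_def
      proof (intro conjI allI impI)
        show "x \<in> V" by (rule xV)
        fix k assume k: "k < d"
        show "x!k \<noteq> v!k"
          using c av k la unfolding x_def by (cases "k = i") auto
      qed
      have xv: "x \<noteq> v" using Anti_ne[OF Ax] .
      have "br v x = br v (a v)" using C[OF v Ax Aav] by blast
      then have bxp: "br v x = p v" unfolding p_def by simp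
      have "Anti (p v) x" unfolding Anti_def
      proof (intro conjI allI impI)
        show "x \<in> V" by (rule xV)
        fix k assume k: "k < d"
        show "x!k \<noteq> p v!k"
        proof (cases "k = i")
          case True then show ?thesis using c la id unfolding x_def by simp
        next
          case False then show ?thesis using oth[OF k False] av k unfolding x_def by simp
        qed
      qed
      then show ?thesis using key[OF v _ xv bxp] bxp by simp
    qed
    then show "p v \<in> V \<and> {v, p v} \<in> T \<and> p (p v) \<noteq> v" using pV pT by blast
  qed
  define v0 where "v0 = replicate d (0::nat)"
  have v0V: "v0 \<in> V" unfolding v0_def V_def hamming_V_def d_def using ge2 by auto
  define f where "f k = (p ^^ k) v0" for k
  have fV: "\<And>k. f k \<in> V"
  proof -
    fix k show "f k \<in> V" by (induction k) (auto simp: f_def v0V step)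
  qed
  have "\<forall>k. f k \<in> V \<and> {f k, f (Suc k)} \<in> T \<and> f (Suc (Suc k)) \<noteq> f k"
  proof
    fix k
    show "f k \<in> V \<and> {f k, f (Suc k)} \<in> T \<and> f (Suc (Suc k)) \<noteq> f k"
      using fV[of k] step[OF fV[of k]] by (simp add: f_def)
  qed
  moreover have "finite V" unfolding V_def by (rule finite_V)
  ultimately show False using no_nb by blast
qed



definition trunc :: "nat \<Rightarrow> nat list \<Rightarrow> nat list" where
  "trunc k x = map (\<lambda>j. if j < k then x!j else 0) [0..<length x]"

lemma trunc_len[simp]: "length (trunc k x) = length x" unfolding trunc_def by simp

lemma trunc_nth[simp]: "j < length x \<Longrightarrow> trunc k x ! j = (if j < k then x!j else 0)"
  unfolding trunc_def by simp

lemma trunc_full: "length x \<le> k \<Longrightarrow> trunc k x = x"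
  by (rule nth_equalityI) auto

locale hctx =
  fixes ns :: "nat list"
  assumes len: "1 \<le> length ns" and ge2: "\<forall>i<length ns. 2 \<le> ns!i"
begin

abbreviation "V \<equiv> hamming_V ns"
abbreviation "E \<equiv> hamming_E ns"
abbreviation "d \<equiv> length ns"

definition T0 :: "nat list set set" where
  "T0 = {{trunc k x, trunc (Suc k) x} | x k. x \<in> V \<and> k < d \<and> x!k \<noteq> 0}"

lemma lenV: "x \<in> V \<Longrightarrow> length x = d" unfolding hamming_V_def by simp

lemma trunc_V: "x \<in> V \<Longrightarrow> trunc k x \<in> V"
  unfolding hamming_V_def using ge2 by auto

lemma trunc_edge: assumes "x \<in> V" "k < d" "x!k \<noteq> 0"
  shows "{trunc k x, trunc (Suc k) x} \<in> E" "trunc k x \<noteq> trunc (Suc k) x"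
proof -
  have l: "length x = d" using lenV assms by simp
  have "{i. i < d \<and> trunc k x ! i \<noteq> trunc (Suc k) x ! i} = {k}"
    using assms l by (auto simp: less_Suc_eq split: if_splits)
  then have "hm ns (trunc k x) (trunc (Suc k) x) = 1" unfolding hm_def by simp
  then show "{trunc k x, trunc (Suc k) x} \<in> E" using E_iff trunc_V assms by blast
  have "trunc k x ! k \<noteq> trunc (Suc k) x ! k" using assms l by simp
  then show "trunc k x \<noteq> trunc (Suc k) x" by metis
qed

lemma T0_cases: "e \<in> T0 \<Longrightarrow> \<exists>x k. e = {trunc k x, trunc (Suc k) x} \<and> x \<in> V \<and> k < d \<and> x!k \<noteq> 0"
  unfolding T0_def by (simp only: mem_Collect_eq)

lemma T0_E: "T0 \<subseteq> E"
proof
  fix e assume "e \<in> T0"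
  then obtain x k where "e = {trunc k x, trunc (Suc k) x}" "x \<in> V" "k < d" "x!k \<noteq> 0"
    using T0_cases by blast
  then show "e \<in> E" using trunc_edge by simp
qed

lemma T0_graph: "is_graph V T0"
  unfolding is_graph_def
proof
  fix e assume "e \<in> T0"
  then obtain x k where "e = {trunc k x, trunc (Suc k) x}" "x \<in> V" "k < d" "x!k \<noteq> 0"
    using T0_cases by blast
  then show "\<exists>u v. e = {u, v} \<and> u \<noteq> v \<and> u \<in> V \<and> v \<in> V"
    using trunc_edge(2) trunc_V by blast
qed

lemma T0_rch: assumes x: "x \<in> V" and kk: "k' \<le> k" "k \<le> d"
  shows "rch V T0 (k - k') (trunc k x) (trunc k' x)"
  using kk
proof (induction k)
  case 0 then show ?case using rch_refl[OF trunc_V[OF x]] by simp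
next
  case (Suc k)
  show ?case
  proof (cases "k' = Suc k")
    case True then show ?thesis using rch_refl[OF trunc_V[OF x]] by simp
  next
    case False
    have k'1: "k' \<le> k" using Suc.prems(1) False by simp
    have k'2: "k < d" using Suc.prems(2) by simp
    have IH: "rch V T0 (k - k') (trunc k x) (trunc k' x)" using Suc.IH[OF k'1] k'2 by simp
    have st: "rch V T0 1 (trunc (Suc k) x) (trunc k x)"
    proof (cases "x!k = 0")
      case True
      have eq: "trunc (Suc k) x = trunc k x"
      proof (rule nth_equalityI)
        show "length (trunc (Suc k) x) = length (trunc k x)" by simp
        fix i assume "i < length (trunc (Suc k) x)"
        then show "trunc (Suc k) x ! i = trunc k x ! i" using True by (cases "i = k") simp_all
      qed
      have "rch V T0 0 (trunc k x) (trunc k x)" by (rule rch_refl) (rule trunc_V[OF x])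
      then have "rch V T0 0 (trunc (Suc k) x) (trunc k x)" by (simp only: eq)
      then show ?thesis by (rule rch_mono) simp
    next
      case False
      have "{trunc k x, trunc (Suc k) x} \<in> T0" unfolding T0_def using x k'2 False by blast
      then have "{trunc (Suc k) x, trunc k x} \<in> T0" by (simp add: insert_commute)
      then show ?thesis by (rule rch_edge) (rule trunc_V[OF x])+
    qed
    have "rch V T0 (1 + (k - k')) (trunc (Suc k) x) (trunc k' x)" by (rule rch_trans[OF st IH])
    moreover have "1 + (k - k') = Suc k - k'" using k'1 by simp
    ultimately show ?thesis by simp
  qed
qed

lemma T0_rch0: assumes "x \<in> V" shows "rch V T0 d x (trunc 0 x)"
  using T0_rch[OF assms, of 0 d] trunc_full[of x d] lenV[OF assms] by simp

lemma trunc0: "x \<in> V \<Longrightarrow> y \<in> V \<Longrightarrow> trunc 0 x = trunc 0 y"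
  by (rule nth_equalityI) (auto simp: lenV)

lemma T0_conn: "connected_graph V T0"
  unfolding connected_graph_def
proof (intro ballI)
  fix u v assume u: "u \<in> V" and v: "v \<in> V"
  have "rch V T0 d (trunc 0 u) v" using rch_sym[OF T0_rch0[OF v]] trunc0[OF u v] by simp
  then have "rch V T0 (d + d) u v" using rch_trans[OF T0_rch0[OF u]] by blast
  then show "\<exists>xs. walk V T0 xs \<and> hd xs = u \<and> last xs = v" unfolding rch_def by blast
qed

end


context hctx begin

definition rank :: "nat list \<Rightarrow> nat" where
  "rank u = card {j. j < d \<and> u!j \<noteq> 0}"

definition par :: "nat list \<Rightarrow> nat list \<Rightarrow> bool" where
  "par u a = (\<exists>k<d. u!k \<noteq> 0 \<and> (\<forall>j. k < j \<and> j < d \<longrightarrow> u!j = 0) \<and> a = u[k:=0])"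

lemma T0_par: assumes "{a,b} \<in> T0" shows "par a b \<or> par b a"
proof -
  obtain x k where e: "{a,b} = {trunc k x, trunc (Suc k) x}" "x \<in> V" "k < d" "x!k \<noteq> 0"
    using T0_cases[OF assms] by blast
  have l: "length x = d" using lenV e(2) .
  have "par (trunc (Suc k) x) (trunc k x)" unfolding par_def
  proof (rule exI[of _ k], intro conjI allI impI)
    show "k < d" by (rule e(3))
    show "trunc (Suc k) x ! k \<noteq> 0" using e l by simp
    fix j assume "k < j \<and> j < d"
    then show "trunc (Suc k) x ! j = 0" using l by simp
  next
    show "trunc k x = (trunc (Suc k) x)[k := 0]"
    proof (rule nth_equalityI)
      show "length (trunc k x) = length ((trunc (Suc k) x)[k := 0])" by simp
      fix i assume "i < length (trunc k x)"
      then show "trunc k x ! i = (trunc (Suc k) x)[k := 0] ! i"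
        by (cases "i = k") (simp_all add: nth_list_update)
    qed
  qed
  moreover have "(a = trunc k x \<and> b = trunc (Suc k) x) \<or> (a = trunc (Suc k) x \<and> b = trunc k x)"
    using e(1) by (simp only: doubleton_eq_iff)
  ultimately show ?thesis by (elim disjE) simp_all
qed

lemma par_rank: assumes "par u a" "length u = d" shows "rank a < rank u"
proof -
  obtain k where k: "k < d" "u!k \<noteq> 0" "a = u[k:=0]" using assms unfolding par_def by blast
  have "{j. j < d \<and> a!j \<noteq> 0} = {j. j < d \<and> u!j \<noteq> 0} - {k}"
  proof (rule set_eqI)
    fix j show "j \<in> {j. j < d \<and> a!j \<noteq> 0} \<longleftrightarrow> j \<in> {j. j < d \<and> u!j \<noteq> 0} - {k}"
      using k assms(2) by (cases "j = k") (simp_all add: nth_list_update)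
  qed
  moreover have "card ({j. j < d \<and> u!j \<noteq> 0} - {k}) < card {j. j < d \<and> u!j \<noteq> 0}"
    by (rule card_Diff1_less) (use k in auto)
  ultimately show ?thesis unfolding rank_def by simp
qed

lemma par_uniq: assumes "par u a" "par u b" shows "a = b"
proof -
  obtain k where k: "k < d" "u!k \<noteq> 0" "\<forall>j. k < j \<and> j < d \<longrightarrow> u!j = 0" "a = u[k:=0]"
    using assms(1) unfolding par_def by blast
  obtain k' where k': "k' < d" "u!k' \<noteq> 0" "\<forall>j. k' < j \<and> j < d \<longrightarrow> u!j = 0" "b = u[k':=0]"
    using assms(2) unfolding par_def by blast
  have "k = k'"
  proof (rule ccontr)
    assume "k \<noteq> k'"
    then consider "k < k'" | "k' < k" by linarith
    then show False
    proof cases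
      case 1
      have "u!k' = 0" using k(3) 1 k'(1) by simp
      then show False using k'(2) by simp
    next
      case 2
      have "u!k = 0" using k'(3) 2 k(1) by simp
      then show False using k(2) by simp
    qed
  qed
  then show ?thesis using k k' by simp
qed

lemma T0_acyc: "\<not> (\<exists>cs. is_cycle V T0 cs)"
proof
  assume "\<exists>cs. is_cycle V T0 cs"
  then obtain cs where c: "is_cycle V T0 cs" by blast
  define n where "n = length cs"
  have n3: "3 \<le> n" and dist: "distinct cs" and w: "walk V T0 cs" and cl: "{last cs, hd cs} \<in> T0"
    using c unfolding is_cycle_def n_def by auto
  have csV: "\<And>i. i < n \<Longrightarrow> cs!i \<in> V" using w unfolding walk_def n_def by auto
  have E1: "\<And>i. Suc i < n \<Longrightarrow> {cs!i, cs!Suc i} \<in> T0" using w unfolding walk_def n_def by blast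
  have ne: "cs \<noteq> []" using n3 n_def by auto
  have E2: "{cs!(n-1), cs!0} \<in> T0" using cl ne unfolding n_def by (simp add: last_conv_nth hd_conv_nth)
  let ?R = "rank ` set cs"
  have "Max ?R \<in> ?R" using ne by (intro Max_in) auto
  then obtain u where u: "u \<in> set cs" "rank u = Max ?R" by auto
  then obtain m where m: "m < n" "cs!m = u" unfolding n_def by (auto simp: in_set_conv_nth)
  have mx: "\<And>i. i < n \<Longrightarrow> rank (cs!i) \<le> rank (cs!m)"
  proof -
    fix i assume "i < n"
    then have "rank (cs!i) \<in> ?R" unfolding n_def by auto
    then show "rank (cs!i) \<le> rank (cs!m)" using m u by simp
  qed
  have pn: "\<And>i. i < n \<Longrightarrow> {cs!m, cs!i} \<in> T0 \<Longrightarrow> par (cs!m) (cs!i)"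
  proof -
    fix i assume i: "i < n" and e: "{cs!m, cs!i} \<in> T0"
    show "par (cs!m) (cs!i)"
    proof (rule ccontr)
      assume "\<not> par (cs!m) (cs!i)"
      then have "par (cs!i) (cs!m)" using T0_par[OF e] by blast
      then have "rank (cs!m) < rank (cs!i)" using par_rank lenV csV i by blast
      then show False using mx[OF i] by simp
    qed
  qed
  define pm where "pm = (if m = 0 then n - 1 else m - 1)"
  define nm where "nm = (if m = n - 1 then 0 else m + 1)"
  have pmn: "pm < n" "nm < n" using m n3 unfolding pm_def nm_def by auto
  have e1: "{cs!m, cs!pm} \<in> T0"
  proof (cases "m = 0")
    case True then show ?thesis using E2 by (simp add: pm_def insert_commute)
  next
    case False then show ?thesis using E1[of "m - 1"] m by (simp add: pm_def insert_commute)
  qed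
  have e2: "{cs!m, cs!nm} \<in> T0"
  proof (cases "m = n - 1")
    case True then show ?thesis using E2 by (simp add: nm_def)
  next
    case False then show ?thesis using E1[of m] m by (simp add: nm_def)
  qed
  have "cs!pm = cs!nm" using par_uniq pn[OF pmn(1) e1] pn[OF pmn(2) e2] by blast
  then have "pm = nm" using dist pmn unfolding n_def by (simp add: nth_eq_iff_index_eq)
  then show False using m n3 unfolding pm_def nm_def by (auto split: if_splits)
qed

lemma T0_span: "spanning_tree V E T0"
  unfolding spanning_tree_def is_tree_def using T0_E T0_graph T0_conn T0_acyc by blast

lemma T0_dist: assumes "{x,y} \<in> E"
  shows "graph_dist V T0 x y \<le> (if ns!0 = 2 then 2 * d - 1 else 2 * d)"
proof -
  have xy: "x \<in> V" "y \<in> V" "hm ns x y = 1" using assms E_iff by blast+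
  then have "card {j. j < length ns \<and> x!j \<noteq> y!j} = 1" by (simp only: hm_def)
  then obtain i where i: "{j. j < length ns \<and> x!j \<noteq> y!j} = {i}"
    by (rule card_1_singletonE)
  have "i \<in> {j. j < length ns \<and> x!j \<noteq> y!j}" unfolding i by (rule singletonI)
  then have id: "i < d" "x!i \<noteq> y!i" by simp_all
  have oth: "\<And>j. j < d \<Longrightarrow> j \<noteq> i \<Longrightarrow> x!j = y!j"
  proof (rule ccontr)
    fix j assume j: "j < d" "j \<noteq> i" "x!j \<noteq> y!j"
    then have "j \<in> {j. j < length ns \<and> x!j \<noteq> y!j}" by simp
    then have "j \<in> {i}" by (simp only: i)
    then show False using j by simp
  qed
  have lx: "length x = d" "length y = d" using lenV xy by auto
  have tr: "\<And>k. k \<le> i \<Longrightarrow> trunc k x = trunc k y"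
  proof -
    fix k assume k: "k \<le> i"
    show "trunc k x = trunc k y"
    proof (rule nth_equalityI)
      show "length (trunc k x) = length (trunc k y)" using lx by simp
      fix j assume j: "j < length (trunc k x)"
      show "trunc k x ! j = trunc k y ! j"
      proof (cases "j < k")
        case True
        then have "x!j = y!j" using oth[of j] j lx k by simp
        then show ?thesis using j lx True by simp
      next
        case False then show ?thesis using j lx by simp
      qed
    qed
  qed
  have rgen: "\<And>z k. z \<in> V \<Longrightarrow> k \<le> d \<Longrightarrow> rch V T0 (d - k) z (trunc k z)"
  proof -
    fix z k assume z: "z \<in> V" "k \<le> d"
    have "rch V T0 (d - k) (trunc d z) (trunc k z)" using T0_rch[OF z(1) z(2)] by simp
    moreover have "trunc d z = z" using trunc_full lenV[OF z(1)] by simp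
    ultimately show "rch V T0 (d - k) z (trunc k z)" by simp
  qed
  have id': "i \<le> d" using id by simp
  have rxi: "rch V T0 (d - i) x (trunc i x)" by (rule rgen[OF xy(1) id'])
  have ryi: "rch V T0 (d - i) (trunc i x) y"
    using rch_sym[OF rgen[OF xy(2) id']] tr[of i] by simp
  have gen: "rch V T0 ((d - i) + (d - i)) x y" by (rule rch_trans[OF rxi ryi])
  have y0: "rch V T0 (d - 0) (trunc 0 x) y"
    using rch_sym[OF rgen[OF xy(2), of 0]] tr[of 0] by simp
  have x0: "rch V T0 (d - 0) (trunc 0 y) x"
    using rch_sym[OF rgen[OF xy(1), of 0]] tr[of 0] by simp
  show ?thesis
  proof (cases "ns!0 = 2 \<and> i = 0")
    case True
    have "x!0 < ns!0" "y!0 < ns!0" using xy(1,2) True id unfolding hamming_V_def by auto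
    then have lt: "x!0 < 2" "y!0 < 2" using True by simp_all
    have "x!0 \<noteq> y!0" using id True by simp
    then have "x!0 = 0 \<or> y!0 = 0" using lt by linarith
    then have "rch V T0 ((d - 1) + (d - 0)) x y \<or> rch V T0 ((d - 1) + (d - 0)) y x"
    proof
      assume z: "x!0 = 0"
      have t1: "trunc 1 x = trunc 0 x"
      proof (rule nth_equalityI)
        show "length (trunc 1 x) = length (trunc 0 x)" by simp
        fix j assume "j < length (trunc 1 x)"
        then show "trunc 1 x ! j = trunc 0 x ! j" using z by (cases "j = 0") simp_all
      qed
      have "rch V T0 (d - 1) x (trunc 1 x)" using rgen[OF xy(1), of 1] len by simp
      then have "rch V T0 (d - 1) x (trunc 0 x)" by (simp only: t1)
      from rch_trans[OF this y0] show ?thesis by (rule disjI1)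
    next
      assume z: "y!0 = 0"
      have t1: "trunc 1 y = trunc 0 y"
      proof (rule nth_equalityI)
        show "length (trunc 1 y) = length (trunc 0 y)" by simp
        fix j assume "j < length (trunc 1 y)"
        then show "trunc 1 y ! j = trunc 0 y ! j" using z by (cases "j = 0") simp_all
      qed
      have "rch V T0 (d - 1) y (trunc 1 y)" using rgen[OF xy(2), of 1] len by simp
      then have "rch V T0 (d - 1) y (trunc 0 y)" by (simp only: t1)
      from rch_trans[OF this x0] show ?thesis by (rule disjI2)
    qed
    then have "rch V T0 ((d - 1) + (d - 0)) x y" by (elim disjE) (assumption, erule rch_sym)
    then have "graph_dist V T0 x y \<le> (d - 1) + (d - 0)" by (rule rch_dist)
    then show ?thesis using True len by simp
  next
    case False
    have g: "graph_dist V T0 x y \<le> (d - i) + (d - i)" using gen by (rule rch_dist)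
    show ?thesis
    proof (cases "ns!0 = 2")
      case True
      then have "1 \<le> i" using False by simp
      then show ?thesis using g True by simp
    next
      case False
      then show ?thesis using g by simp
    qed
  qed
qed

end


theorem theorem3p2:
  fixes ns :: "nat list"
  assumes "1 \<le> length ns"
    and "sorted ns"
    and "\<forall>i<length ns. 2 \<le> ns!i"
  shows "tree_stretch (hamming_V ns) (hamming_E ns) =
           (if ns!0 = 2 then 2 * length ns - 1 else 2 * length ns)"
proof -
  interpret hctx ns using assms(1,3) by unfold_locales
  define b where "b = (if ns!0 = 2 then 2 * length ns - 1 else 2 * length ns)"
  have lo: "\<And>T. spanning_tree V E T \<Longrightarrow> b \<le> stretch V E T"
    unfolding b_def using lower_bound assms by blast
  let ?S = "{graph_dist V T0 u v | u v. {u, v} \<in> E}"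
  have finS: "finite ?S"
  proof -
    have sub: "?S \<subseteq> (\<lambda>(u,v). graph_dist V T0 u v) ` (V \<times> V)"
    proof
      fix z assume "z \<in> ?S"
      then obtain u v where uv: "z = graph_dist V T0 u v" "{u,v} \<in> E" by blast
      then have "u \<in> V" "v \<in> V" using E_memV by blast+
      then show "z \<in> (\<lambda>(u,v). graph_dist V T0 u v) ` (V \<times> V)" using uv(1) by force
    qed
    have "finite (V \<times> V)" using finite_V by simp
    then have "finite ((\<lambda>(u,v). graph_dist V T0 u v) ` (V \<times> V))" by (rule finite_imageI)
    then show ?thesis by (rule finite_subset[OF sub])
  qed
  have neS: "?S \<noteq> {}"
  proof -
    define x0 where "x0 = replicate (length ns) (0::nat)"
    have n0: "2 \<le> ns!0" using assms(1,3) by (simp add: Suc_le_eq)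
    have x0V: "x0 \<in> V" unfolding x0_def hamming_V_def using assms(3) by fastforce
    have x1V: "x0[0 := 1] \<in> V"
      by (rule upd_V) (use x0V n0 assms(1) in \<open>auto simp: Suc_le_eq\<close>)
    have "hm ns x0 (x0[0 := 1]) = 1"
      by (rule hm_upd) (use assms(1) in \<open>auto simp: x0_def Suc_le_eq\<close>)
    then have "{x0, x0[0:=1]} \<in> E" using E_iff x0V x1V by blast
    then show ?thesis by blast
  qed
  have up: "stretch V E T0 \<le> b"
    unfolding stretch_def b_def
  proof (subst Max_le_iff[OF finS neS], intro ballI)
    fix z assume "z \<in> ?S"
    then obtain u v where uv: "z = graph_dist V T0 u v" "{u,v} \<in> E" by blast
    then show "z \<le> (if ns!0 = 2 then 2 * length ns - 1 else 2 * length ns)" using T0_dist by simp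
  qed
  have eq: "stretch V E T0 = b" using up lo[OF T0_span] by simp
  let ?A = "{stretch V E T |T. spanning_tree V E T}"
  have finA: "finite ?A"
  proof -
    have "{T. spanning_tree V E T} \<subseteq> Pow E" unfolding spanning_tree_def by blast
    then have "finite {T. spanning_tree V E T}" using finite_E finite_Pow_iff finite_subset by metis
    then have "finite (stretch V E ` {T. spanning_tree V E T})" by (rule finite_imageI)
    moreover have "?A = stretch V E ` {T. spanning_tree V E T}" by blast
    ultimately show ?thesis by simp
  qed
  have "Min ?A = b"
  proof (rule Min_eqI[OF finA])
    fix y assume "y \<in> ?A"
    then show "b \<le> y" using lo by blast
  next
    show "b \<in> ?A" using eq T0_span by blast
  qed
  then show ?thesis unfolding tree_stretch_def b_def by simp
qed


end
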